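(* Let $S,T$ be ordered trees, let $f\colon T\to S$ be a rigid surjection, and let $x$ be a leaf of $S$. Let $y$ be the leaf of $T$ that is $f$-conjugate to $x$. Then the image of $f_x=f\upharpoonright T^y$ equals $S^x$, and $f_x\colon T^y\to S^x$ is a rigid surjection.
   Context: A tree is a finite, non-empty poset $(T,\sqsubseteq_T)$ with a smallest element (root) in which the predecessors of each element form a chain (each element is its own predecessor); $v\wedge_T w$ is the largest common predecessor. An ordered tree has a fixed linear order on the immediate successors of each node, inducing the lexicographic linear order $\leq_T$: $v\leq_T w$ if $v\sqsubseteq_T w$, and for incomparable $v,w$, $v\leq_T w$ iff the immediate successor of $v\wedge_T w$ below $v$ precedes the one below $w$. A morphism preserves $\wedge$, is $\leq$-monotone and maps root to root; an embedding is an injective morphism. A function $f\colon T\to S$ is a rigid surjection if there is a morphism $e\colon S\to T$ (unique, called the injection of $f$) with $f\circ e={\rm id}_S$ and $e(f(w))\sqsubseteq_T w$ for all $w$. For $v\in T$, $T^v=\{w\in T\mid w\leq_T v\}$ (ordered tree with inherited orders). A leaf is a $\sqsubseteq$-maximal node. For an embedding $i\colon S\to T$, a leaf $y$ of $T$ is $i$-conjugate to a leaf $x$ of $S$ if: (i) when $x$ is the $\leq_S$-largest leaf of $S$, $y$ is the $\leq_T$-largest leaf of $T$; (ii) otherwise, with $x'$ the $\leq_S$-smallest leaf with $x<_S x'$, $y$ is the $\leq_T$-largest leaf with $y<_T i(x')$ and $i(x)\wedge_T i(x')=y\wedge_T i(x')$. A leaf $y$ of $T$ is $f$-conjugate to $x$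 if it is $i$-conjugate to $x$ for $i$ the injection of $f$ (such $y$ exists and is unique). *)

theory Defs
  imports Main
begin

text \<open>An ordered tree: a carrier set, the tree order (\<sqsubseteq>), and a sibling order
  which is a linear order on the set of immediate successors of each node.\<close>

record 'a otree =
  carrier :: "'a set"
  tle :: "'a \<Rightarrow> 'a \<Rightarrow> bool"
  sib :: "'a \<Rightarrow> 'a \<Rightarrow> bool"

definition is_tree :: "'a otree \<Rightarrow> bool" where
  "is_tree T \<longleftrightarrow>
     finite (carrier T) \<and> carrier T \<noteq> {} \<and>
     (\<forall>v\<in>carrier T. tle T v v) \<and>
     (\<forall>v\<in>carrier T. \<forall>w\<in>carrier T. tle T v w \<and> tle T w v \<longrightarrow> v = w) \<and>
     (\<forall>u\<in>carrier T. \<forall>v\<in>carrier T. \<forall>w\<in>carrier T. tle T u v \<and> tle T v w \<longrightarrow> tle T u w) \<and>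
     (\<exists>r\<in>carrier T. \<forall>v\<in>carrier T. tle T r v) \<and>
     (\<forall>w\<in>carrier T. \<forall>u\<in>carrier T. \<forall>v\<in>carrier T.
        tle T u w \<and> tle T v w \<longrightarrow> tle T u v \<or> tle T v u)"

definition isucc :: "'a otree \<Rightarrow> 'a \<Rightarrow> 'a \<Rightarrow> bool" where
  "isucc T v w \<longleftrightarrow> v \<in> carrier T \<and> w \<in> carrier T \<and> tle T v w \<and> v \<noteq> w \<and>
     \<not> (\<exists>u\<in>carrier T. tle T v u \<and> tle T u w \<and> u \<noteq> v \<and> u \<noteq> w)"

definition ordered_tree :: "'a otree \<Rightarrow> bool" where
  "ordered_tree T \<longleftrightarrow> is_tree T \<and>
     (\<forall>v\<in>carrier T.
        (\<forall>a. isucc T v a \<longrightarrow> sib T a a) \<and>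
        (\<forall>a b. isucc T v a \<and> isucc T v b \<and> sib T a b \<and> sib T b a \<longrightarrow> a = b) \<and>
        (\<forall>a b c. isucc T v a \<and> isucc T v b \<and> isucc T v c \<and> sib T a b \<and> sib T b c
                   \<longrightarrow> sib T a c) \<and>
        (\<forall>a b. isucc T v a \<and> isucc T v b \<longrightarrow> sib T a b \<or> sib T b a))"

definition root :: "'a otree \<Rightarrow> 'a" where
  "root T = (THE r. r \<in> carrier T \<and> (\<forall>v\<in>carrier T. tle T r v))"

definition meet :: "'a otree \<Rightarrow> 'a \<Rightarrow> 'a \<Rightarrow> 'a" where
  "meet T v w = (THE m. m \<in> carrier T \<and> tle T m v \<and> tle T m w \<and>
      (\<forall>u\<in>carrier T. tle T u v \<and> tle T u w \<longrightarrow> tle T u m))"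

definition succ_toward :: "'a otree \<Rightarrow> 'a \<Rightarrow> 'a \<Rightarrow> 'a" where
  "succ_toward T m v = (THE c. isucc T m c \<and> tle T c v)"

definition lex :: "'a otree \<Rightarrow> 'a \<Rightarrow> 'a \<Rightarrow> bool" where
  "lex T v w \<longleftrightarrow> tle T v w \<or>
     (\<not> tle T v w \<and> \<not> tle T w v \<and>
      sib T (succ_toward T (meet T v w) v) (succ_toward T (meet T v w) w))"

definition lex_less :: "'a otree \<Rightarrow> 'a \<Rightarrow> 'a \<Rightarrow> bool" where
  "lex_less T v w \<longleftrightarrow> lex T v w \<and> v \<noteq> w"

definition morphism :: "'a otree \<Rightarrow> 'b otree \<Rightarrow> ('a \<Rightarrow> 'b) \<Rightarrow> bool" where
  "morphism T S f \<longleftrightarrow>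
     (\<forall>v\<in>carrier T. f v \<in> carrier S) \<and>
     (\<forall>v\<in>carrier T. \<forall>w\<in>carrier T. f (meet T v w) = meet S (f v) (f w)) \<and>
     (\<forall>v\<in>carrier T. \<forall>w\<in>carrier T. lex T v w \<longrightarrow> lex S (f v) (f w)) \<and>
     f (root T) = root S"

definition embedding :: "'a otree \<Rightarrow> 'b otree \<Rightarrow> ('a \<Rightarrow> 'b) \<Rightarrow> bool" where
  "embedding T S f \<longleftrightarrow> morphism T S f \<and> inj_on f (carrier T)"

definition injection_of :: "'b otree \<Rightarrow> 'a otree \<Rightarrow> ('b \<Rightarrow> 'a) \<Rightarrow> ('a \<Rightarrow> 'b) \<Rightarrow> bool" where
  "injection_of T S f e \<longleftrightarrow> morphism S T e \<and>
     (\<forall>s\<in>carrier S. f (e s) = s) \<and>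
     (\<forall>w\<in>carrier T. tle T (e (f w)) w)"

definition rigid_surj :: "'b otree \<Rightarrow> 'a otree \<Rightarrow> ('b \<Rightarrow> 'a) \<Rightarrow> bool" where
  "rigid_surj T S f \<longleftrightarrow> (\<forall>w\<in>carrier T. f w \<in> carrier S) \<and> (\<exists>e. injection_of T S f e)"

definition subtree_upto :: "'a otree \<Rightarrow> 'a \<Rightarrow> 'a otree" where
  "subtree_upto T v = T\<lparr>carrier := {w \<in> carrier T. lex T w v}\<rparr>"

definition leaf :: "'a otree \<Rightarrow> 'a \<Rightarrow> bool" where
  "leaf T v \<longleftrightarrow> v \<in> carrier T \<and> (\<forall>w\<in>carrier T. tle T v w \<longrightarrow> w = v)"

definition i_conjugate ::
  "'a otree \<Rightarrow> 'b otree \<Rightarrow> ('a \<Rightarrow> 'b) \<Rightarrow> 'a \<Rightarrow> 'b \<Rightarrow> bool" where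
  "i_conjugate S T i x y \<longleftrightarrow> leaf S x \<and> leaf T y \<and>
     (if (\<forall>z. leaf S z \<longrightarrow> lex S z x)
      then (\<forall>z. leaf T z \<longrightarrow> lex T z y)
      else (\<exists>x'. leaf S x' \<and> lex_less S x x' \<and>
                 (\<forall>z. leaf S z \<and> lex_less S x z \<longrightarrow> lex S x' z) \<and>
                 lex_less T y (i x') \<and> meet T (i x) (i x') = meet T y (i x') \<and>
                 (\<forall>z. leaf T z \<and> lex_less T z (i x') \<and>
                      meet T (i x) (i x') = meet T z (i x') \<longrightarrow> lex T z y)))"

text \<open>\<open>y\<close> is \<open>f\<close>-conjugate to \<open>x\<close> (the injection of \<open>f\<close> is unique on the carrier).\<close>
definition f_conjugate ::
  "'b otree \<Rightarrow> 'a otree \<Rightarrow> ('b \<Rightarrow> 'a) \<Rightarrow> 'a \<Rightarrow> 'b \<Rightarrow> bool" where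
  "f_conjugate T S f x y \<longleftrightarrow> (\<exists>e. injection_of T S f e \<and> i_conjugate S T e x y)"

end

theory Submission
  imports Defs
begin

lemma tr_fin: "is_tree T \<Longrightarrow> finite (carrier T)" by (simp add: is_tree_def)
lemma tr_refl: "is_tree T \<Longrightarrow> v \<in> carrier T \<Longrightarrow> tle T v v" by (simp add: is_tree_def)
lemma tr_antisym: "is_tree T \<Longrightarrow> v \<in> carrier T \<Longrightarrow> w \<in> carrier T \<Longrightarrow> tle T v w \<Longrightarrow> tle T w v \<Longrightarrow> v = w"
  unfolding is_tree_def by blast
lemma tr_trans: "is_tree T \<Longrightarrow> u \<in> carrier T \<Longrightarrow> v \<in> carrier T \<Longrightarrow> w \<in> carrier T \<Longrightarrow> tle T u v \<Longrightarrow> tle T v w \<Longrightarrow> tle T u w"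
  unfolding is_tree_def by blast
lemma tr_chain: "is_tree T \<Longrightarrow> u \<in> carrier T \<Longrightarrow> v \<in> carrier T \<Longrightarrow> w \<in> carrier T \<Longrightarrow> tle T u w \<Longrightarrow> tle T v w \<Longrightarrow> tle T u v \<or> tle T v u"
  unfolding is_tree_def by blast
lemma tr_root_ex: "is_tree T \<Longrightarrow> \<exists>r\<in>carrier T. \<forall>v\<in>carrier T. tle T r v"
  unfolding is_tree_def by blast
lemma ot_tree: "ordered_tree T \<Longrightarrow> is_tree T" by (simp add: ordered_tree_def)

lemma root_props: assumes "is_tree T"
  shows "root T \<in> carrier T \<and> (\<forall>v\<in>carrier T. tle T (root T) v)"
proof -
  obtain r where r: "r \<in> carrier T" "\<forall>v\<in>carrier T. tle T r v" using tr_root_ex[OF assms] by blast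
  have "root T = r" unfolding root_def
  proof (rule the_equality)
    show "r \<in> carrier T \<and> (\<forall>v\<in>carrier T. tle T r v)" using r by blast
    fix r' assume "r' \<in> carrier T \<and> (\<forall>v\<in>carrier T. tle T r' v)"
    then show "r' = r" using r tr_antisym[OF assms] by blast
  qed
  then show ?thesis using r by simp
qed

lemma root_eq: assumes "is_tree T" "r \<in> carrier T" "\<forall>v\<in>carrier T. tle T r v" shows "root T = r"
  using root_props[OF assms(1)] assms tr_antisym[OF assms(1)] by blast

definition desc where "desc T c = {u \<in> carrier T. tle T c u}"
definition anc where "anc T c = {u \<in> carrier T. tle T u c}"

lemma desc_less: assumes "is_tree T" "c \<in> carrier T" "u \<in> carrier T" "tle T c u" "c \<noteq> u"
  shows "card (desc T u) < card (desc T c)"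
proof (rule psubset_card_mono)
  show "finite (desc T c)" using tr_fin[OF assms(1)] unfolding desc_def by simp
  have "desc T u \<subseteq> desc T c" unfolding desc_def using tr_trans[OF assms(1)] assms by blast
  moreover have "c \<in> desc T c" "c \<notin> desc T u" unfolding desc_def
    using assms tr_refl[OF assms(1)] tr_antisym[OF assms(1)] by blast+
  ultimately show "desc T u \<subset> desc T c" by blast
qed

lemma anc_less: assumes "is_tree T" "c \<in> carrier T" "u \<in> carrier T" "tle T c u" "c \<noteq> u"
  shows "card (anc T c) < card (anc T u)"
proof (rule psubset_card_mono)
  show "finite (anc T u)" using tr_fin[OF assms(1)] unfolding anc_def by simp
  have "anc T c \<subseteq> anc T u" unfolding anc_def using tr_trans[OF assms(1)] assms by blast
  moreover have "u \<in> anc T u" "u \<notin> anc T c" unfolding anc_def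
    using assms tr_refl[OF assms(1)] tr_antisym[OF assms(1)] by blast+
  ultimately show "anc T c \<subset> anc T u" by blast
qed

lemma meet_ex: assumes T: "is_tree T" and v: "v \<in> carrier T" and w: "w \<in> carrier T"
  shows "\<exists>m. m \<in> carrier T \<and> tle T m v \<and> tle T m w \<and> (\<forall>u\<in>carrier T. tle T u v \<and> tle T u w \<longrightarrow> tle T u m)"
proof -
  let ?P = "\<lambda>c. c \<in> carrier T \<and> tle T c v \<and> tle T c w"
  have "?P (root T)" using root_props[OF T] v w by blast
  then obtain c where c: "?P c" "\<forall>u. ?P u \<longrightarrow> card (desc T c) \<le> card (desc T u)"
    using ex_has_least_nat[of ?P "root T" "\<lambda>c. card (desc T c)"] by blast
  have "\<forall>u\<in>carrier T. tle T u v \<and> tle T u w \<longrightarrow> tle T u c"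
  proof (intro ballI impI)
    fix u assume u: "u \<in> carrier T" "tle T u v \<and> tle T u w"
    have "tle T u c \<or> tle T c u" using tr_chain[OF T u(1) _ v] c u by blast
    moreover { assume "tle T c u" "c \<noteq> u"
      then have "card (desc T u) < card (desc T c)" using desc_less[OF T] c u by blast
      with c u have False by fastforce }
    ultimately show "tle T u c" using tr_refl[OF T u(1)] by blast
  qed
  then show ?thesis using c by blast
qed

lemma meet_props: assumes T: "is_tree T" and "v \<in> carrier T" "w \<in> carrier T"
  shows "meet T v w \<in> carrier T \<and> tle T (meet T v w) v \<and> tle T (meet T v w) w \<and>
    (\<forall>u\<in>carrier T. tle T u v \<and> tle T u w \<longrightarrow> tle T u (meet T v w))"
proof -
  obtain m where m: "m \<in> carrier T \<and> tle T m v \<and> tle T m w \<and> (\<forall>u\<in>carrier T. tle T u v \<and> tle T u w \<longrightarrow> tle T u m)"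
    using meet_ex[OF assms] by blast
  have "meet T v w = m" unfolding meet_def
    apply (rule the_equality) using m apply blast
    using m tr_antisym[OF T] by blast
  then show ?thesis using m by simp
qed

lemma meet_eq: assumes T: "is_tree T" "v \<in> carrier T" "w \<in> carrier T" "m \<in> carrier T"
  "tle T m v" "tle T m w" "\<forall>u\<in>carrier T. tle T u v \<and> tle T u w \<longrightarrow> tle T u m"
  shows "meet T v w = m"
  using meet_props[OF assms(1-3)] assms tr_antisym[OF assms(1)] by blast

lemma meet_tle: assumes T: "is_tree T" "u \<in> carrier T" "v \<in> carrier T" "tle T u v"
  shows "meet T u v = u"
  using meet_eq[OF T(1,2,3,2)] T tr_refl[OF T(1)] by blast

lemma isucc_unique: assumes "isucc T m a" "isucc T m b" "tle T a b" shows "a = b"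
  using assms unfolding isucc_def by blast

lemma isucc_below: assumes T: "is_tree T" and ma: "isucc T m a" and c: "c \<in> carrier T" and v: "v \<in> carrier T"
  and "tle T m c" "m \<noteq> c" "tle T a v" "tle T c v"
  shows "tle T a c"
proof -
  have a: "a \<in> carrier T" using ma unfolding isucc_def by blast
  have "tle T a c \<or> tle T c a" using tr_chain[OF T a c v] assms by blast
  then show ?thesis using assms tr_refl[OF T c] unfolding isucc_def by blast
qed

lemma succ_ex: assumes T: "is_tree T" and m: "m \<in> carrier T" and v: "v \<in> carrier T" and "tle T m v" "m \<noteq> v"
  shows "\<exists>a. isucc T m a \<and> tle T a v"
proof -
  let ?P = "\<lambda>c. c \<in> carrier T \<and> tle T m c \<and> m \<noteq> c \<and> tle T c v"
  have "?P v" using assms tr_refl[OF T v] by blast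
  then obtain a where a: "?P a" "\<forall>u. ?P u \<longrightarrow> card (anc T a) \<le> card (anc T u)"
    using ex_has_least_nat[of ?P v "\<lambda>c. card (anc T c)"] by blast
  have "isucc T m a" unfolding isucc_def
  proof (intro conjI)
    show "\<not> (\<exists>u\<in>carrier T. tle T m u \<and> tle T u a \<and> u \<noteq> m \<and> u \<noteq> a)"
    proof
      assume "\<exists>u\<in>carrier T. tle T m u \<and> tle T u a \<and> u \<noteq> m \<and> u \<noteq> a"
      then obtain u where u: "u \<in> carrier T" "tle T m u" "tle T u a" "u \<noteq> m" "u \<noteq> a" by blast
      have "?P u" using u a tr_trans[OF T u(1) _ v] by blast
      moreover have "card (anc T u) < card (anc T a)" using anc_less[OF T u(1) _ u(3) u(5)] a by blast
      ultimately show False using a(2) by fastforce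
    qed
  qed (use a m in auto)
  then show ?thesis using a by blast
qed

lemma succ_eq: assumes T: "is_tree T" and ma: "isucc T m a" and "tle T a v" and v: "v \<in> carrier T"
  shows "succ_toward T m v = a"
  unfolding succ_toward_def
proof (rule the_equality)
  show "isucc T m a \<and> tle T a v" using assms by blast
  fix b assume b: "isucc T m b \<and> tle T b v"
  have ab: "a \<in> carrier T" "b \<in> carrier T" using ma b unfolding isucc_def by auto
  have "tle T a b \<or> tle T b a" using tr_chain[OF T ab(1) ab(2) v] assms b by blast
  then show "b = a" using isucc_unique ma b by metis
qed

lemma succ_props: assumes T: "is_tree T" and m: "m \<in> carrier T" and v: "v \<in> carrier T" and "tle T m v" "m \<noteq> v"
  shows "isucc T m (succ_toward T m v) \<and> tle T (succ_toward T m v) v"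
  using succ_ex[OF assms] succ_eq[OF T _ _ v] by metis

lemma leaf_ex: assumes T: "is_tree T" and v: "v \<in> carrier T"
  shows "\<exists>z. leaf T z \<and> tle T v z"
proof -
  let ?P = "\<lambda>c. c \<in> carrier T \<and> tle T v c"
  have "?P v" using v tr_refl[OF T v] by blast
  then obtain c where c: "?P c" "\<forall>u. ?P u \<longrightarrow> card (desc T c) \<le> card (desc T u)"
    using ex_has_least_nat[of ?P v "\<lambda>c. card (desc T c)"] by blast
  have "leaf T c" unfolding leaf_def
  proof (intro conjI ballI impI)
    show "c \<in> carrier T" using c by blast
    fix w assume w: "w \<in> carrier T" "tle T c w"
    show "w = c"
    proof (rule ccontr)
      assume "w \<noteq> c"
      then have "card (desc T w) < card (desc T c)" using desc_less[OF T _ w(1) w(2)] c by metis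
      moreover have "?P w" using c w tr_trans[OF T v _ w(1)] by blast
      ultimately show False using c(2) by fastforce
    qed
  qed
  then show ?thesis using c by blast
qed


lemma branch: assumes T: "is_tree T" and ma: "isucc T m a" and mb: "isucc T m b" and ab: "a \<noteq> b"
  and v: "v \<in> carrier T" and w: "w \<in> carrier T" and av: "tle T a v" and bw: "tle T b w"
  shows "\<not> tle T v w \<and> \<not> tle T w v \<and> meet T v w = m \<and> succ_toward T m v = a \<and> succ_toward T m w = b \<and> (lex T v w \<longleftrightarrow> sib T a b)"
proof -
  have mc: "m \<in> carrier T" "a \<in> carrier T" "b \<in> carrier T" "tle T m a" "tle T m b" "m \<noteq> a" "m \<noteq> b"
    using ma mb unfolding isucc_def by auto
  have nab: "\<not> tle T a w"
  proof
    assume "tle T a w"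
    then have "tle T a b \<or> tle T b a" using tr_chain[OF T mc(2) mc(3) w] bw by blast
    then show False using isucc_unique ma mb ab by metis
  qed
  have nbv: "\<not> tle T b v"
  proof
    assume "tle T b v"
    then have "tle T a b \<or> tle T b a" using tr_chain[OF T mc(2) mc(3) v] av by blast
    then show False using isucc_unique ma mb ab by metis
  qed
  have 1: "\<not> tle T v w" using tr_trans[OF T mc(2) v w] av nab by blast
  have 2: "\<not> tle T w v" using tr_trans[OF T mc(3) w v] bw nbv by blast
  have mv: "tle T m v" using tr_trans[OF T mc(1) mc(2) v] mc av by blast
  have mw: "tle T m w" using tr_trans[OF T mc(1) mc(3) w] mc bw by blast
  have 3: "meet T v w = m"
  proof (rule meet_eq[OF T v w mc(1) mv mw])
    show "\<forall>u\<in>carrier T. tle T u v \<and> tle T u w \<longrightarrow> tle T u m"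
    proof (intro ballI impI)
      fix u assume u: "u \<in> carrier T" "tle T u v \<and> tle T u w"
      have "tle T u a \<or> tle T a u" using tr_chain[OF T u(1) mc(2) v] u av by blast
      moreover have "\<not> tle T a u" using nab u tr_trans[OF T mc(2) u(1) w] by blast
      ultimately have ua: "tle T u a" "u \<noteq> a" using tr_refl[OF T u(1)] by auto
      have "tle T u m \<or> tle T m u" using tr_chain[OF T u(1) mc(1) mc(2)] ua mc by blast
      then show "tle T u m" using ma ua u unfolding isucc_def by blast
    qed
  qed
  have 4: "succ_toward T m v = a" using succ_eq[OF T ma av v] .
  have 5: "succ_toward T m w = b" using succ_eq[OF T mb bw w] .
  show ?thesis using 1 2 3 4 5 unfolding lex_def by simp
qed

lemma decomp: assumes T: "is_tree T" and v: "v \<in> carrier T" and w: "w \<in> carrier T"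
  and nvw: "\<not> tle T v w" and nwv: "\<not> tle T w v"
  shows "\<exists>a b. isucc T (meet T v w) a \<and> isucc T (meet T v w) b \<and> a \<noteq> b \<and> tle T a v \<and> tle T b w"
proof -
  note M = meet_props[OF T v w]
  have mv: "meet T v w \<noteq> v" using M nvw by metis
  have mw: "meet T v w \<noteq> w" using M nwv by metis
  obtain a where a: "isucc T (meet T v w) a" "tle T a v" using succ_ex[OF T _ v _ mv] M by blast
  obtain b where b: "isucc T (meet T v w) b" "tle T b w" using succ_ex[OF T _ w _ mw] M by blast
  have "a \<noteq> b"
  proof
    assume "a = b"
    have ac: "a \<in> carrier T" using a unfolding isucc_def by blast
    have "tle T a (meet T v w)" using M ac a b \<open>a = b\<close> by blast
    then show False using a(1) M ac tr_antisym[OF T] unfolding isucc_def by metis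
  qed
  then show ?thesis using a b by blast
qed

lemma sib_antisym: assumes "ordered_tree T" "isucc T m a" "isucc T m b" "sib T a b" "sib T b a"
  shows "a = b"
proof -
  have "m \<in> carrier T" using assms(2) unfolding isucc_def by blast
  then show ?thesis using assms unfolding ordered_tree_def by blast
qed

lemma sib_trans: assumes "ordered_tree T" "isucc T m a" "isucc T m b" "isucc T m c" "sib T a b" "sib T b c"
  shows "sib T a c"
proof -
  have "m \<in> carrier T" using assms(2) unfolding isucc_def by blast
  then show ?thesis using assms unfolding ordered_tree_def by blast
qed

lemma sib_total: assumes "ordered_tree T" "isucc T m a" "isucc T m b"
  shows "sib T a b \<or> sib T b a"
proof -
  have "m \<in> carrier T" using assms(2) unfolding isucc_def by blast
  then show ?thesis using assms unfolding ordered_tree_def by blast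
qed

lemma lex_tle: "tle T v w \<Longrightarrow> lex T v w" by (simp add: lex_def)

lemma lex_antisym: assumes O: "ordered_tree T" and v: "v \<in> carrier T" and w: "w \<in> carrier T"
  and "lex T v w" "lex T w v" shows "v = w"
proof (cases "tle T v w \<or> tle T w v")
  case True
  then show ?thesis using assms tr_antisym[OF ot_tree[OF O] v w] unfolding lex_def by blast
next
  case False
  note T = ot_tree[OF O]
  obtain a b where ab: "isucc T (meet T v w) a" "isucc T (meet T v w) b" "a \<noteq> b" "tle T a v" "tle T b w"
    using decomp[OF T v w] False by blast
  have "sib T a b" using branch[OF T ab(1) ab(2) ab(3) v w ab(4) ab(5)] assms by blast
  moreover have "sib T b a" using branch[OF T ab(2) ab(1) _ w v ab(5) ab(4)] ab(3) assms by blast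
  ultimately show ?thesis using sib_antisym[OF O ab(1) ab(2)] ab(3) by blast
qed

lemma lex_total: assumes O: "ordered_tree T" and v: "v \<in> carrier T" and w: "w \<in> carrier T"
  shows "lex T v w \<or> lex T w v"
proof (cases "tle T v w \<or> tle T w v")
  case True
  then show ?thesis unfolding lex_def by blast
next
  case False
  note T = ot_tree[OF O]
  obtain a b where ab: "isucc T (meet T v w) a" "isucc T (meet T v w) b" "a \<noteq> b" "tle T a v" "tle T b w"
    using decomp[OF T v w] False by blast
  have "sib T a b \<or> sib T b a" using sib_total[OF O ab(1) ab(2)] .
  moreover have "lex T v w \<longleftrightarrow> sib T a b" using branch[OF T ab(1) ab(2) ab(3) v w ab(4) ab(5)] by blast
  moreover have "b \<noteq> a" using ab(3) by blast
  then have "lex T w v \<longleftrightarrow> sib T b a" using branch[OF T ab(2) ab(1) _ w v ab(5) ab(4)] by blast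
  ultimately show ?thesis by blast
qed

lemma lex_trans: assumes O: "ordered_tree T" and u: "u \<in> carrier T" and v: "v \<in> carrier T" and w: "w \<in> carrier T"
  and uv: "lex T u v" and vw: "lex T v w" shows "lex T u w"
proof -
  note T = ot_tree[OF O]
  show ?thesis
  proof (cases "tle T u v")
    case uv': True
    show ?thesis
    proof (cases "tle T v w")
      case True then show ?thesis using tr_trans[OF T u v w] uv' lex_tle by metis
    next
      case nvw: False
      show ?thesis
      proof (cases "tle T u w")
        case True then show ?thesis by (rule lex_tle)
      next
        case nuw: False
        have nwv: "\<not> tle T w v" using vw nvw unfolding lex_def by blast
        obtain a b where ab: "isucc T (meet T v w) a" "isucc T (meet T v w) b" "a \<noteq> b" "tle T a v" "tle T b w"
          using decomp[OF T v w nvw nwv] by blast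
        have sab: "sib T a b" using branch[OF T ab(1) ab(2) ab(3) v w ab(4) ab(5)] vw by blast
        note M = meet_props[OF T v w]
        have "tle T u (meet T v w) \<or> tle T (meet T v w) u" using tr_chain[OF T u _ v] M uv' by blast
        moreover have "\<not> tle T u (meet T v w)" using nuw M tr_trans[OF T u _ w] by blast
        ultimately have mu: "tle T (meet T v w) u" "meet T v w \<noteq> u" using M tr_refl[OF T u] by auto
        have au: "tle T a u" using isucc_below[OF T ab(1) u v mu ab(4) uv'] .
        show ?thesis using branch[OF T ab(1) ab(2) ab(3) u w au ab(5)] sab by blast
      qed
    qed
  next
    case nuv: False
    have nvu: "\<not> tle T v u" using uv nuv unfolding lex_def by blast
    obtain a1 b1 where ab1: "isucc T (meet T u v) a1" "isucc T (meet T u v) b1" "a1 \<noteq> b1" "tle T a1 u" "tle T b1 v"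
      using decomp[OF T u v nuv nvu] by blast
    note B1 = branch[OF T ab1(1) ab1(2) ab1(3) u v ab1(4) ab1(5)]
    have s1: "sib T a1 b1" using B1 uv by blast
    show ?thesis
    proof (cases "tle T v w")
      case True
      have "tle T b1 w" using tr_trans[OF T _ v w] ab1 True unfolding isucc_def by blast
      then show ?thesis using branch[OF T ab1(1) ab1(2) ab1(3) u w ab1(4)] s1 by blast
    next
      case nvw: False
      have nwv: "\<not> tle T w v" using vw nvw unfolding lex_def by blast
      obtain b2 c2 where bc2: "isucc T (meet T v w) b2" "isucc T (meet T v w) c2" "b2 \<noteq> c2" "tle T b2 v" "tle T c2 w"
        using decomp[OF T v w nvw nwv] by blast
      note B2 = branch[OF T bc2(1) bc2(2) bc2(3) v w bc2(4) bc2(5)]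
      have s2: "sib T b2 c2" using B2 vw by blast
      note M1 = meet_props[OF T u v] and M2 = meet_props[OF T v w]
      have "tle T (meet T u v) (meet T v w) \<or> tle T (meet T v w) (meet T u v)"
        using tr_chain[OF T _ _ v] M1 M2 by blast
      moreover {
        assume eq: "meet T u v = meet T v w"
        have "b1 = b2" using succ_eq[OF T ab1(2) ab1(5) v] succ_eq[OF T bc2(1) bc2(4) v] eq by simp
        have sac: "sib T a1 c2" using sib_trans[OF O ab1(1) ab1(2), of c2] bc2(2) eq s1 s2 \<open>b1 = b2\<close> by simp
        have "a1 \<noteq> c2"
        proof
          assume "a1 = c2"
          then have "sib T b1 a1" using s2 \<open>b1 = b2\<close> by simp
          then show False using sib_antisym[OF O ab1(1) ab1(2) s1] ab1(3) by blast
        qed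
        then have ?thesis using branch[OF T ab1(1) _ _ u w ab1(4), of c2] bc2 eq sac by auto
      }
      moreover {
        assume lt: "tle T (meet T u v) (meet T v w)" "meet T u v \<noteq> meet T v w"
        have "tle T b1 (meet T v w)" using isucc_below[OF T ab1(2) _ v lt ab1(5)] M2 by blast
        then have "tle T b1 w" using tr_trans[OF T _ _ w] M2 ab1(2) unfolding isucc_def by blast
        then have ?thesis using branch[OF T ab1(1) ab1(2) ab1(3) u w ab1(4)] s1 by blast
      }
      moreover {
        assume lt: "tle T (meet T v w) (meet T u v)" "meet T u v \<noteq> meet T v w"
        have "tle T b2 (meet T u v)" using isucc_below[OF T bc2(1) _ v lt(1) _ bc2(4)] lt(2) M1 by metis
        then have "tle T b2 u" using tr_trans[OF T _ _ u] M1 bc2(1) unfolding isucc_def by blast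
        then have ?thesis using branch[OF T bc2(1) bc2(2) bc2(3) u w _ bc2(5)] s2 by blast
      }
      ultimately show ?thesis by blast
    qed
  qed
qed


lemma sub_is_tree: assumes T: "is_tree T" and C: "C \<subseteq> carrier T" "C \<noteq> {}"
  and D: "\<forall>w\<in>C. \<forall>u\<in>carrier T. tle T u w \<longrightarrow> u \<in> C"
  shows "is_tree (T\<lparr>carrier := C\<rparr>)"
proof -
  obtain c where c: "c \<in> C" using C by blast
  have r: "root T \<in> C" using root_props[OF T] c C D by blast
  show ?thesis unfolding is_tree_def
  proof (simp, intro conjI)
    show "finite C" using tr_fin[OF T] C finite_subset by blast
    show "C \<noteq> {}" by fact
    show "\<forall>v\<in>C. tle T v v" using tr_refl[OF T] C by blast
    show "\<forall>v\<in>C. \<forall>w\<in>C. tle T v w \<and> tle T w v \<longrightarrow> v = w" using tr_antisym[OF T] C by blast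
    show "\<forall>u\<in>C. \<forall>v\<in>C. \<forall>w\<in>C. tle T u v \<and> tle T v w \<longrightarrow> tle T u w" using tr_trans[OF T] C by blast
    show "\<exists>r\<in>C. \<forall>v\<in>C. tle T r v" using r root_props[OF T] C by blast
    show "\<forall>w\<in>C. \<forall>u\<in>C. \<forall>v\<in>C. tle T u w \<and> tle T v w \<longrightarrow> tle T u v \<or> tle T v u" using tr_chain[OF T] C by blast
  qed
qed

lemma sub_meet: assumes T: "is_tree T" and C: "C \<subseteq> carrier T" "C \<noteq> {}"
  and D: "\<forall>w\<in>C. \<forall>u\<in>carrier T. tle T u w \<longrightarrow> u \<in> C" and v: "v \<in> C" and w: "w \<in> C"
  shows "meet (T\<lparr>carrier := C\<rparr>) v w = meet T v w"
proof -
  note T' = sub_is_tree[OF T C D]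
  have vw: "v \<in> carrier T" "w \<in> carrier T" using v w C by auto
  note M = meet_props[OF T vw]
  have mC: "meet T v w \<in> C" using M D v by blast
  show ?thesis by (rule meet_eq[OF T']) (use M mC v w C in auto)
qed

lemma sub_root: assumes T: "is_tree T" and C: "C \<subseteq> carrier T" "C \<noteq> {}"
  and D: "\<forall>w\<in>C. \<forall>u\<in>carrier T. tle T u w \<longrightarrow> u \<in> C"
  shows "root (T\<lparr>carrier := C\<rparr>) = root T"
proof -
  note T' = sub_is_tree[OF T C D]
  obtain c where c: "c \<in> C" using C by blast
  have r: "root T \<in> C" using root_props[OF T] c C D by blast
  show ?thesis by (rule root_eq[OF T']) (use r root_props[OF T] C in auto)
qed

lemma sub_succ: assumes T: "is_tree T" and C: "C \<subseteq> carrier T"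
  and D: "\<forall>w\<in>C. \<forall>u\<in>carrier T. tle T u w \<longrightarrow> u \<in> C" and m: "m \<in> C" and v: "v \<in> C"
  shows "succ_toward (T\<lparr>carrier := C\<rparr>) m v = succ_toward T m v"
proof -
  have "\<And>c. (isucc (T\<lparr>carrier := C\<rparr>) m c \<and> tle (T\<lparr>carrier := C\<rparr>) c v) = (isucc T m c \<and> tle T c v)"
  proof -
    fix c
    show "(isucc (T\<lparr>carrier := C\<rparr>) m c \<and> tle (T\<lparr>carrier := C\<rparr>) c v) = (isucc T m c \<and> tle T c v)"
      unfolding isucc_def using C D m v by auto
  qed
  then show ?thesis unfolding succ_toward_def by simp
qed

lemma sub_lex: assumes T: "is_tree T" and C: "C \<subseteq> carrier T" "C \<noteq> {}"
  and D: "\<forall>w\<in>C. \<forall>u\<in>carrier T. tle T u w \<longrightarrow> u \<in> C" and v: "v \<in> C" and w: "w \<in> C"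
  shows "lex (T\<lparr>carrier := C\<rparr>) v w = lex T v w"
proof -
  have vw: "v \<in> carrier T" "w \<in> carrier T" using v w C by auto
  have mC: "meet T v w \<in> C" using meet_props[OF T vw] D v by blast
  show ?thesis unfolding lex_def
    using sub_meet[OF T C D v w] sub_succ[OF T C(1) D mC v] sub_succ[OF T C(1) D mC w] by simp
qed

lemma e_tle: assumes S: "is_tree S" and T: "is_tree T" and em: "morphism S T e"
  and u: "u \<in> carrier S" and v: "v \<in> carrier S" and uv: "tle S u v"
  shows "tle T (e u) (e v)"
proof -
  have "meet S u v = u" using meet_tle[OF S u v uv] .
  then have "e u = meet T (e u) (e v)" using em u v unfolding morphism_def by metis
  moreover have "e u \<in> carrier T" "e v \<in> carrier T" using em u v unfolding morphism_def by auto
  ultimately show ?thesis using meet_props[OF T] by metis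
qed

lemma e_refl: assumes S: "is_tree S" and T: "is_tree T" and em: "morphism S T e"
  and fe: "\<forall>s\<in>carrier S. f (e s) = s"
  and u: "u \<in> carrier S" and v: "v \<in> carrier S" and uv: "tle T (e u) (e v)"
  shows "tle S u v"
proof -
  have eu: "e u \<in> carrier T" "e v \<in> carrier T" using em u v unfolding morphism_def by auto
  have "meet T (e u) (e v) = e u" using meet_tle[OF T eu uv] .
  then have "e (meet S u v) = e u" using em u v unfolding morphism_def by metis
  then have "f (e (meet S u v)) = f (e u)" by simp
  then have "meet S u v = u" using fe u meet_props[OF S u v] by metis
  then show ?thesis using meet_props[OF S u v] by metis
qed


theorem lemma4p14:
  fixes S :: "'a otree" and T :: "'b otree" and f :: "'b \<Rightarrow> 'a"
  assumes "ordered_tree S" and "ordered_tree T"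
    and "rigid_surj T S f"
    and "leaf S x"
    and "f_conjugate T S f x y"
  shows "f ` carrier (subtree_upto T y) = carrier (subtree_upto S x) \<and>
         rigid_surj (subtree_upto T y) (subtree_upto S x) f"
proof -
  note OS = assms(1) and OT = assms(2)
  have S: "is_tree S" and T: "is_tree T" using assms(1,2) ot_tree by auto
  obtain e where inj: "injection_of T S f e" and conj: "i_conjugate S T e x y"
    using assms(5) unfolding f_conjugate_def by blast
  have emor: "morphism S T e" and fe: "\<forall>s\<in>carrier S. f (e s) = s" and ef: "\<forall>w\<in>carrier T. tle T (e (f w)) w"
    using inj unfolding injection_of_def by auto
  have fS: "\<forall>w\<in>carrier T. f w \<in> carrier S" using assms(3) unfolding rigid_surj_def by auto
  have eT: "\<forall>s\<in>carrier S. e s \<in> carrier T"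
    and emeet: "\<forall>u\<in>carrier S. \<forall>v\<in>carrier S. e (meet S u v) = meet T (e u) (e v)"
    and elex: "\<forall>u\<in>carrier S. \<forall>v\<in>carrier S. lex S u v \<longrightarrow> lex T (e u) (e v)"
    and eroot: "e (root S) = root T" using emor unfolding morphism_def by auto
  have xl: "leaf S x" by fact
  have xS: "x \<in> carrier S" using assms(4) unfolding leaf_def by auto
  have yl: "leaf T y" using conj unfolding i_conjugate_def by auto
  have yT: "y \<in> carrier T" using yl unfolding leaf_def by auto
  have einj: "\<And>u v. u \<in> carrier S \<Longrightarrow> v \<in> carrier S \<Longrightarrow> e u = e v \<Longrightarrow> u = v" using fe by metis
  have key1: "lex T (e x) y"
  proof (cases "\<forall>z. leaf S z \<longrightarrow> lex S z x")
    case True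
    have c1: "\<forall>z. leaf T z \<longrightarrow> lex T z y" using conj[unfolded i_conjugate_def if_P[OF True]] by blast
    obtain z where z: "leaf T z" "tle T (e x) z" using leaf_ex[OF T] eT xS by blast
    have zT: "z \<in> carrier T" using z unfolding leaf_def by auto
    have "lex T z y" using c1 z by blast
    then show ?thesis using lex_trans[OF OT _ zT yT lex_tle[OF z(2)]] eT xS by blast
  next
    case False
    then obtain x' where x': "leaf S x'" "lex_less S x x'" "\<forall>z. leaf S z \<and> lex_less S x z \<longrightarrow> lex S x' z"
      "lex_less T y (e x')" "meet T (e x) (e x') = meet T y (e x')"
      "\<forall>z. leaf T z \<and> lex_less T z (e x') \<and> meet T (e x) (e x') = meet T z (e x') \<longrightarrow> lex T z y"
      using conj[unfolded i_conjugate_def if_not_P[OF False]] by blast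
    have x'S: "x' \<in> carrier S" using x' unfolding leaf_def by auto
    have xx': "x \<noteq> x'" using x'(2) unfolding lex_less_def by simp
    have n1: "\<not> tle S x x'" using xl x'S xx' unfolding leaf_def by blast
    have n2: "\<not> tle S x' x" using x'(1) xS xx' unfolding leaf_def by blast
    have ex: "e x \<in> carrier T" "e x' \<in> carrier T" using eT xS x'S by auto
    have n1': "\<not> tle T (e x) (e x')" using e_refl[OF S T emor fe xS x'S] n1 by blast
    have n2': "\<not> tle T (e x') (e x)" using e_refl[OF S T emor fe x'S xS] n2 by blast
    obtain a b where ab: "isucc T (meet T (e x) (e x')) a" "isucc T (meet T (e x) (e x')) b" "a \<noteq> b"
      "tle T a (e x)" "tle T b (e x')" using decomp[OF T ex n1' n2'] by blast
    obtain z where z: "leaf T z" "tle T (e x) z" using leaf_ex[OF T] ex by blast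
    have zT: "z \<in> carrier T" using z unfolding leaf_def by auto
    have aT: "a \<in> carrier T" using ab unfolding isucc_def by blast
    have az: "tle T a z" using tr_trans[OF T aT ex(1) zT] ab z by blast
    note B1 = branch[OF T ab(1) ab(2) ab(3) ex ab(4) ab(5)]
    note B2 = branch[OF T ab(1) ab(2) ab(3) zT ex(2) az ab(5)]
    have lx: "lex T (e x) (e x')" using elex xS x'S x' unfolding lex_less_def by blast
    have "lex T z (e x')" using B1 B2 lx by blast
    moreover have "z \<noteq> e x'" using B2 tr_refl[OF T zT] by blast
    ultimately have "lex T z y" using x'(6) z B2 unfolding lex_less_def by auto
    then show ?thesis using lex_trans[OF OT ex(1) zT yT lex_tle[OF z(2)]] by blast
  qed
  define CT where "CT = {w \<in> carrier T. lex T w y}"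
  define CS where "CS = {s \<in> carrier S. lex S s x}"
  have B: "\<forall>s\<in>CS. e s \<in> CT"
  proof
    fix s assume "s \<in> CS"
    then have s: "s \<in> carrier S" "lex S s x" unfolding CS_def by auto
    have l: "lex T (e s) (e x)" using elex s xS by blast
    have "e s \<in> carrier T" "e x \<in> carrier T" using eT s xS by auto
    then have "lex T (e s) y" using lex_trans[OF OT _ _ yT l key1] by blast
    then show "e s \<in> CT" using \<open>e s \<in> carrier T\<close> unfolding CT_def by simp
  qed
  have C: "\<forall>w\<in>CT. f w \<in> CS"
  proof
    fix w assume "w \<in> CT"
    then have w: "w \<in> carrier T" "lex T w y" unfolding CT_def by auto
    have sS: "f w \<in> carrier S" using fS w by blast
    define s where "s = f w"
    have sS': "s \<in> carrier S" using sS s_def by simp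
    have esw: "tle T (e s) w" using ef w s_def by blast
    have esT: "e s \<in> carrier T" using eT sS' by blast
    have "lex S s x"
    proof (cases "\<forall>z. leaf S z \<longrightarrow> lex S z x")
      case True
      obtain z where z: "leaf S z" "tle S s z" using leaf_ex[OF S sS'] by blast
      have zS: "z \<in> carrier S" using z unfolding leaf_def by auto
      have "lex S z x" using True z by blast
      then show ?thesis using lex_trans[OF OS sS' zS xS lex_tle[OF z(2)]] by blast
    next
      case False
      then obtain x' where x': "leaf S x'" "lex_less S x x'" "\<forall>z. leaf S z \<and> lex_less S x z \<longrightarrow> lex S x' z"
        "lex_less T y (e x')" "meet T (e x) (e x') = meet T y (e x')"
        using conj[unfolded i_conjugate_def if_not_P[OF False]] by blast
      have x'S: "x' \<in> carrier S" using x' unfolding leaf_def by auto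
      have ex: "e x \<in> carrier T" "e x' \<in> carrier T" using eT xS x'S by auto
      show ?thesis
      proof (rule ccontr)
        assume nsx: "\<not> lex S s x"
        then have xs: "lex S x s" using lex_total[OF OS sS' xS] by blast
        have sx: "s \<noteq> x" using nsx lex_tle[OF tr_refl[OF S xS]] by metis
        have nxs: "\<not> tle S x s" using xl sS' sx unfolding leaf_def by metis
        obtain z where z: "leaf S z" "tle S s z" using leaf_ex[OF S sS'] by blast
        have zS: "z \<in> carrier S" using z unfolding leaf_def by auto
        have xz: "lex S x z" using lex_trans[OF OS xS sS' zS xs lex_tle[OF z(2)]] .
        have zx: "z \<noteq> x"
        proof
          assume "z = x"
          then have "lex S s x" using lex_tle[OF z(2)] by simp
          then show False using nsx by blast
        qed
        have x'z: "lex S x' z" using x'(3) z xz zx unfolding lex_less_def by blast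
        show False
        proof (cases "tle S s x'")
          case True
          have nsx': "\<not> tle S s x" using nsx lex_tle[of S s x] by blast
          note MS = meet_props[OF S xS x'S]
          have "tle S s (meet S x x') \<or> tle S (meet S x x') s" using tr_chain[OF S sS' _ x'S] MS True by blast
          moreover have "\<not> tle S s (meet S x x')" using nsx' MS tr_trans[OF S sS' _ xS] by blast
          ultimately have ms: "tle S (meet S x x') s" "meet S x x' \<noteq> s" using MS tr_refl[OF S sS'] by auto
          have mT: "meet S x x' \<in> carrier S" using MS by blast
          have ems: "tle T (e (meet S x x')) (e s)" using e_tle[OF S T emor mT sS' ms(1)] .
          have ems2: "e (meet S x x') \<noteq> e s" using einj[OF mT sS'] ms(2) by blast
          have Meq: "meet T y (e x') = e (meet S x x')" using x'(5) emeet xS x'S by metis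
          have emT: "e (meet S x x') \<in> carrier T" using eT mT by blast
          have esx': "tle T (e s) (e x')" using e_tle[OF S T emor sS' x'S True] .
          have ny1: "\<not> tle T y (e x')"
          proof
            assume "tle T y (e x')"
            then have "meet T y (e x') = y" using meet_tle[OF T yT ex(2)] by blast
            then have "y = e (meet S x x')" using Meq by simp
            then have "e s = y" using yl esT ems unfolding leaf_def by blast
            then show False using ems2 \<open>y = e (meet S x x')\<close> by simp
          qed
          have ny2: "\<not> tle T (e x') y"
          proof
            assume "tle T (e x') y"
            then have "tle T (e x') (meet T y (e x'))" using meet_props[OF T yT ex(2)] tr_refl[OF T ex(2)] ex by blast
            then have "tle T (e x') (e (meet S x x'))" using Meq by simp
            then have "tle S x' (meet S x x')" using e_refl[OF S T emor fe x'S mT] by blast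
            then have "tle S x' x" using tr_trans[OF S x'S mT xS] MS by blast
            then have "x' = x" using x'(1) xS unfolding leaf_def by blast
            then show False using x'(2) unfolding lex_less_def by simp
          qed
          obtain a b where ab: "isucc T (meet T y (e x')) a" "isucc T (meet T y (e x')) b" "a \<noteq> b"
            "tle T a y" "tle T b (e x')" using decomp[OF T yT ex(2) ny1 ny2] by blast
          note B1 = branch[OF T ab(1) ab(2) ab(3) yT ex(2) ab(4) ab(5)]
          have sab: "sib T a b" using B1 x'(4) unfolding lex_less_def by blast
          have bes: "tle T b (e s)" using isucc_below[OF T ab(2) esT ex(2) _ _ ab(5) esx'] Meq ems ems2 by simp
          have bT: "b \<in> carrier T" using ab unfolding isucc_def by blast
          have bw: "tle T b w" using tr_trans[OF T bT esT w(1)] bes esw by blast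
          have "b \<noteq> a" using ab(3) by blast
          note B2 = branch[OF T ab(2) ab(1) this w(1) yT bw ab(4)]
          have "sib T b a" using B2 w(2) by blast
          then show False using sib_antisym[OF OT ab(1) ab(2) sab] ab(3) by blast
        next
          case nsx': False
          have nx's: "\<not> tle S x' s" using x' sS' nsx' tr_refl[OF S sS'] unfolding leaf_def by metis
          have "lex S x' s"
          proof (rule ccontr)
            assume "\<not> lex S x' s"
            then have sx': "lex S s x'" using lex_total[OF OS sS' x'S] by blast
            obtain a b where ab: "isucc S (meet S s x') a" "isucc S (meet S s x') b" "a \<noteq> b"
              "tle S a s" "tle S b x'" using decomp[OF S sS' x'S nsx' nx's] by blast
            note B1 = branch[OF S ab(1) ab(2) ab(3) sS' x'S ab(4) ab(5)]
            have aS: "a \<in> carrier S" using ab unfolding isucc_def by blast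
            have az: "tle S a z" using tr_trans[OF S aS sS' zS] ab z by blast
            note B2 = branch[OF S ab(1) ab(2) ab(3) zS x'S az ab(5)]
            have "lex S z x'" using B1 B2 sx' by blast
            then have "z = x'" using lex_antisym[OF OS zS x'S] x'z by blast
            then show False using z nsx' by blast
          qed
          then have "lex T (e x') (e s)" using elex x'S sS' by blast
          then have "lex T (e x') w" using lex_trans[OF OT ex(2) esT w(1) _ lex_tle[OF esw]] by blast
          then have "lex T (e x') y" using lex_trans[OF OT ex(2) w(1) yT] w by blast
          then have "e x' = y" using lex_antisym[OF OT ex(2) yT] x'(4) unfolding lex_less_def by blast
          then show False using x'(4) unfolding lex_less_def by simp
        qed
      qed
    qed
    then show "f w \<in> CS" using sS' s_def unfolding CS_def by simp
  qed
  have CT: "CT \<subseteq> carrier T" "CT \<noteq> {}" using yT lex_tle[OF tr_refl[OF T yT]] unfolding CT_def by auto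
  have CS: "CS \<subseteq> carrier S" "CS \<noteq> {}" using xS lex_tle[OF tr_refl[OF S xS]] unfolding CS_def by auto
  have DT: "\<forall>w\<in>CT. \<forall>u\<in>carrier T. tle T u w \<longrightarrow> u \<in> CT"
  proof (intro ballI impI)
    fix w u assume w: "w \<in> CT" and u: "u \<in> carrier T" and uw: "tle T u w"
    have "lex T u y" using lex_trans[OF OT u _ yT lex_tle[OF uw]] w unfolding CT_def by blast
    then show "u \<in> CT" using u unfolding CT_def by simp
  qed
  have DS: "\<forall>w\<in>CS. \<forall>u\<in>carrier S. tle S u w \<longrightarrow> u \<in> CS"
  proof (intro ballI impI)
    fix w u assume w: "w \<in> CS" and u: "u \<in> carrier S" and uw: "tle S u w"
    have "lex S u x" using lex_trans[OF OS u _ xS lex_tle[OF uw]] w unfolding CS_def by blast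
    then show "u \<in> CS" using u unfolding CS_def by simp
  qed
  have subT: "subtree_upto T y = T\<lparr>carrier := CT\<rparr>" by (simp add: subtree_upto_def CT_def)
  have subS: "subtree_upto S x = S\<lparr>carrier := CS\<rparr>" by (simp add: subtree_upto_def CS_def)
  have img: "f ` CT = CS"
  proof
    show "f ` CT \<subseteq> CS" using C by blast
    show "CS \<subseteq> f ` CT"
    proof
      fix s assume "s \<in> CS"
      then have "e s \<in> CT" "f (e s) = s" using B fe CS by auto
      then show "s \<in> f ` CT" by (metis imageI)
    qed
  qed
  have mor: "morphism (S\<lparr>carrier := CS\<rparr>) (T\<lparr>carrier := CT\<rparr>) e"
    unfolding morphism_def
  proof (simp, intro conjI ballI impI)
    show "\<And>v. v \<in> CS \<Longrightarrow> e v \<in> CT" using B by blast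
    fix v w assume vw: "v \<in> CS" "w \<in> CS"
    then have evw: "e v \<in> CT" "e w \<in> CT" using B by auto
    show "e (meet (S\<lparr>carrier := CS\<rparr>) v w) = meet (T\<lparr>carrier := CT\<rparr>) (e v) (e w)"
      using sub_meet[OF S CS DS vw] sub_meet[OF T CT DT evw] emeet vw CS by auto
  next
    fix v w assume vw: "v \<in> CS" "w \<in> CS" and l: "lex (S\<lparr>carrier := CS\<rparr>) v w"
    then have evw: "e v \<in> CT" "e w \<in> CT" using B by auto
    show "lex (T\<lparr>carrier := CT\<rparr>) (e v) (e w)"
      using sub_lex[OF S CS DS vw] sub_lex[OF T CT DT evw] elex vw CS l by auto
  next
    show "e (root (S\<lparr>carrier := CS\<rparr>)) = root (T\<lparr>carrier := CT\<rparr>)"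
      using sub_root[OF S CS DS] sub_root[OF T CT DT] eroot by simp
  qed
  have rs: "rigid_surj (T\<lparr>carrier := CT\<rparr>) (S\<lparr>carrier := CS\<rparr>) f"
    unfolding rigid_surj_def injection_of_def
  proof (intro conjI exI[of _ e])
    show "\<forall>w\<in>carrier (T\<lparr>carrier := CT\<rparr>). f w \<in> carrier (S\<lparr>carrier := CS\<rparr>)" using C by simp
    show "morphism (S\<lparr>carrier := CS\<rparr>) (T\<lparr>carrier := CT\<rparr>) e" by (rule mor)
    show "\<forall>s\<in>carrier (S\<lparr>carrier := CS\<rparr>). f (e s) = s" using fe CS by auto
    show "\<forall>w\<in>carrier (T\<lparr>carrier := CT\<rparr>). tle (T\<lparr>carrier := CT\<rparr>) (e (f w)) w" using ef CT by auto
  qed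
  show ?thesis using img rs subT subS by simp
qed

end
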